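(* Let $L$ be a category, $C:L\to\mathbf{Pos}$ an interpretation (resp. a normal interpretation), $\{A(a)\}_{a\in\mathrm{Obj}(L)}$ a family of posets, and $G=\{(\alpha_a:C(a)\to A(a),\ \gamma_a:A(a)\to C(a))\}_{a}$ a family of Galois connections $\alpha_a\dashv\gamma_a$ (resp. Galois insertions). Define $C^G(a)=A(a)$ and, for $f:a\to b$ in $L$, $C^G(f)=\alpha_b\circ C(f)\circ\gamma_a$. Then: (i) $C^G:L\to\mathbf{Pos}$ is an interpretation (resp. a normal interpretation). (ii) $\gamma=\{\gamma_a\}$ is a concretization of interpretation from $C^G$ to $C$; moreover, for every interpretation $A':L\to\mathbf{Pos}$ with $A'(a)=A(a)$ for all $a$, if $\gamma$ is a concretization of interpretation from $A'$ to $C$, then $C^G\le A'$. (iii) $\alpha=\{\alpha_a\}$ is an abstraction of interpretation from $C$ to $C^G$; moreover, for every interpretation $A'$ with $A'(a)=A(a)$ for all $a$, if $\alpha$ is an abstraction of interpretation from $C$ to $A'$, then $C^G\le A'$.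
   Context: $\mathbf{Pos}$ is the category of posets and monotone maps; monotone maps $X\to Y$ are ordered pointwise. An interpretation $F:L\to\mathbf{Pos}$ (oplax functor) consists of a poset $F(a)$ for each object $a$ and a monotone map $F(f):F(a)\to F(b)$ for each morphism $f:a\to b$, such that $F(\mathrm{id}_a)\le\mathrm{id}_{F(a)}$ and $F(g\circ f)\le F(g)\circ F(f)$. It is normal if $F(\mathrm{id}_a)=\mathrm{id}_{F(a)}$. For interpretations $F,G$, $F\le G$ means $F(a)=G(a)$ for all objects $a$ and $F(f)\le G(f)$ for all morphisms $f$. A Galois connection $\alpha\dashv\gamma$ between posets $C$ and $A$ is a pair of monotone maps $\alpha:C\to A$, $\gamma:A\to C$ with $\alpha(c)\le a\iff c\le\gamma(a)$; it is a Galois insertion if moreover $\alpha\circ\gamma=\mathrm{id}$. Given interpretations $A,C$, a family of monotone maps $\gamma_a:A(a)\to C(a)$ is a concretization of interpretation from $A$ to $C$ if $C(f)\circ\gamma_a\le\gamma_b\circ A(f)$ for all $f:a\to b$; a family $\alpha_a:C(a)\to A(a)$ is an abstraction of interpretation from $C$ to $A$ if $\alpha_b\circ C(f)\le A(f)\circ\alpha_a$ for all $f:a\to b$. *)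

theory Defs
  imports Main
begin

record ('o, 'm) category =
  Obj   :: "'o set"
  Arr   :: "'m set"
  dom   :: "'m \<Rightarrow> 'o"
  cod   :: "'m \<Rightarrow> 'o"
  ident :: "'o \<Rightarrow> 'm"
  comp  :: "'m \<Rightarrow> 'm \<Rightarrow> 'm"   (* comp L g f = g \<circ> f *)

definition is_category :: "('o, 'm) category \<Rightarrow> bool" where
  "is_category L \<longleftrightarrow>
     (\<forall>f\<in>Arr L. dom L f \<in> Obj L \<and> cod L f \<in> Obj L) \<and>
     (\<forall>a\<in>Obj L. ident L a \<in> Arr L \<and> dom L (ident L a) = a \<and> cod L (ident L a) = a) \<and>
     (\<forall>f\<in>Arr L. \<forall>g\<in>Arr L. cod L f = dom L g \<longrightarrow>
         comp L g f \<in> Arr L \<and> dom L (comp L g f) = dom L f \<and> cod L (comp L g f) = cod L g) \<and>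
     (\<forall>f\<in>Arr L. comp L f (ident L (dom L f)) = f \<and> comp L (ident L (cod L f)) f = f) \<and>
     (\<forall>f\<in>Arr L. \<forall>g\<in>Arr L. \<forall>h\<in>Arr L. cod L f = dom L g \<longrightarrow> cod L g = dom L h \<longrightarrow>
         comp L h (comp L g f) = comp L (comp L h g) f)"

type_synonym 'e poset = "'e set \<times> ('e \<Rightarrow> 'e \<Rightarrow> bool)"

definition is_poset :: "'e poset \<Rightarrow> bool" where
  "is_poset P \<longleftrightarrow> (let X = fst P; le = snd P in
     (\<forall>x\<in>X. le x x) \<and>
     (\<forall>x\<in>X. \<forall>y\<in>X. le x y \<and> le y x \<longrightarrow> x = y) \<and>
     (\<forall>x\<in>X. \<forall>y\<in>X. \<forall>z\<in>X. le x y \<and> le y z \<longrightarrow> le x z))"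

definition monotone_map :: "'e poset \<Rightarrow> 'f poset \<Rightarrow> ('e \<Rightarrow> 'f) \<Rightarrow> bool" where
  "monotone_map P Q h \<longleftrightarrow>
     (\<forall>x\<in>fst P. h x \<in> fst Q) \<and>
     (\<forall>x\<in>fst P. \<forall>y\<in>fst P. snd P x y \<longrightarrow> snd Q (h x) (h y))"

definition map_le :: "'e poset \<Rightarrow> 'f poset \<Rightarrow> ('e \<Rightarrow> 'f) \<Rightarrow> ('e \<Rightarrow> 'f) \<Rightarrow> bool" where
  "map_le P Q h k \<longleftrightarrow> (\<forall>x\<in>fst P. snd Q (h x) (k x))"

definition interpretation_of ::
  "('o, 'm) category \<Rightarrow> ('o \<Rightarrow> 'e poset) \<Rightarrow> ('m \<Rightarrow> 'e \<Rightarrow> 'e) \<Rightarrow> bool" where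
  "interpretation_of L FO FM \<longleftrightarrow>
     (\<forall>a\<in>Obj L. is_poset (FO a)) \<and>
     (\<forall>f\<in>Arr L. monotone_map (FO (dom L f)) (FO (cod L f)) (FM f)) \<and>
     (\<forall>a\<in>Obj L. map_le (FO a) (FO a) (FM (ident L a)) id) \<and>
     (\<forall>f\<in>Arr L. \<forall>g\<in>Arr L. cod L f = dom L g \<longrightarrow>
        map_le (FO (dom L f)) (FO (cod L g)) (FM (comp L g f)) (FM g \<circ> FM f))"

definition normal_interpretation ::
  "('o, 'm) category \<Rightarrow> ('o \<Rightarrow> 'e poset) \<Rightarrow> ('m \<Rightarrow> 'e \<Rightarrow> 'e) \<Rightarrow> bool" where
  "normal_interpretation L FO FM \<longleftrightarrow>
     interpretation_of L FO FM \<and>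
     (\<forall>a\<in>Obj L. \<forall>x\<in>fst (FO a). FM (ident L a) x = x)"

definition interp_le ::
  "('o, 'm) category \<Rightarrow> ('o \<Rightarrow> 'e poset) \<Rightarrow> ('m \<Rightarrow> 'e \<Rightarrow> 'e)
     \<Rightarrow> ('o \<Rightarrow> 'e poset) \<Rightarrow> ('m \<Rightarrow> 'e \<Rightarrow> 'e) \<Rightarrow> bool" where
  "interp_le L FO FM GO GM \<longleftrightarrow>
     (\<forall>a\<in>Obj L. FO a = GO a) \<and>
     (\<forall>f\<in>Arr L. map_le (FO (dom L f)) (FO (cod L f)) (FM f) (GM f))"

definition galois_connection ::
  "'c poset \<Rightarrow> 'a poset \<Rightarrow> ('c \<Rightarrow> 'a) \<Rightarrow> ('a \<Rightarrow> 'c) \<Rightarrow> bool" where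
  "galois_connection C A \<alpha> \<gamma> \<longleftrightarrow>
     monotone_map C A \<alpha> \<and> monotone_map A C \<gamma> \<and>
     (\<forall>c\<in>fst C. \<forall>a\<in>fst A. snd A (\<alpha> c) a \<longleftrightarrow> snd C c (\<gamma> a))"

definition galois_insertion ::
  "'c poset \<Rightarrow> 'a poset \<Rightarrow> ('c \<Rightarrow> 'a) \<Rightarrow> ('a \<Rightarrow> 'c) \<Rightarrow> bool" where
  "galois_insertion C A \<alpha> \<gamma> \<longleftrightarrow>
     galois_connection C A \<alpha> \<gamma> \<and> (\<forall>a\<in>fst A. \<alpha> (\<gamma> a) = a)"

definition concretization ::
  "('o, 'm) category \<Rightarrow> ('o \<Rightarrow> 'a poset) \<Rightarrow> ('m \<Rightarrow> 'a \<Rightarrow> 'a)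
     \<Rightarrow> ('o \<Rightarrow> 'c poset) \<Rightarrow> ('m \<Rightarrow> 'c \<Rightarrow> 'c) \<Rightarrow> ('o \<Rightarrow> 'a \<Rightarrow> 'c) \<Rightarrow> bool" where
  "concretization L AO AM CO CM \<gamma> \<longleftrightarrow>
     (\<forall>a\<in>Obj L. monotone_map (AO a) (CO a) (\<gamma> a)) \<and>
     (\<forall>f\<in>Arr L. map_le (AO (dom L f)) (CO (cod L f))
                   (CM f \<circ> \<gamma> (dom L f)) (\<gamma> (cod L f) \<circ> AM f))"

definition abstraction ::
  "('o, 'm) category \<Rightarrow> ('o \<Rightarrow> 'c poset) \<Rightarrow> ('m \<Rightarrow> 'c \<Rightarrow> 'c)
     \<Rightarrow> ('o \<Rightarrow> 'a poset) \<Rightarrow> ('m \<Rightarrow> 'a \<Rightarrow> 'a) \<Rightarrow> ('o \<Rightarrow> 'c \<Rightarrow> 'a) \<Rightarrow> bool" where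
  "abstraction L CO CM AO AM \<alpha> \<longleftrightarrow>
     (\<forall>a\<in>Obj L. monotone_map (CO a) (AO a) (\<alpha> a)) \<and>
     (\<forall>f\<in>Arr L. map_le (CO (dom L f)) (AO (cod L f))
                   (\<alpha> (cod L f) \<circ> CM f) (AM f \<circ> \<alpha> (dom L f)))"

definition induced_morph ::
  "('o, 'm) category \<Rightarrow> ('m \<Rightarrow> 'c \<Rightarrow> 'c) \<Rightarrow> ('o \<Rightarrow> 'c \<Rightarrow> 'a) \<Rightarrow> ('o \<Rightarrow> 'a \<Rightarrow> 'c)
     \<Rightarrow> 'm \<Rightarrow> 'a \<Rightarrow> 'a" where
  "induced_morph L CM \<alpha> \<gamma> f = \<alpha> (cod L f) \<circ> CM f \<circ> \<gamma> (dom L f)"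

end

theory Submission
  imports Defs
begin

theorem mainTheorem5:
  fixes L :: "('o, 'm) category"
    and CO :: "'o \<Rightarrow> 'c poset" and CM :: "'m \<Rightarrow> 'c \<Rightarrow> 'c"
    and AO :: "'o \<Rightarrow> 'a poset"
    and \<alpha> :: "'o \<Rightarrow> 'c \<Rightarrow> 'a" and \<gamma> :: "'o \<Rightarrow> 'a \<Rightarrow> 'c"
  assumes L: "is_category L"
    and C: "interpretation_of L CO CM"
    and A: "\<forall>a\<in>Obj L. is_poset (AO a)"
    and G: "\<forall>a\<in>Obj L. galois_connection (CO a) (AO a) (\<alpha> a) (\<gamma> a)"
  shows
    "interpretation_of L AO (induced_morph L CM \<alpha> \<gamma>)
     \<and> ((normal_interpretation L CO CM \<and>
          (\<forall>a\<in>Obj L. galois_insertion (CO a) (AO a) (\<alpha> a) (\<gamma> a)))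
         \<longrightarrow> normal_interpretation L AO (induced_morph L CM \<alpha> \<gamma>))
     \<and> concretization L AO (induced_morph L CM \<alpha> \<gamma>) CO CM \<gamma>
     \<and> (\<forall>A'O A'M. interpretation_of L A'O A'M \<longrightarrow> (\<forall>a\<in>Obj L. A'O a = AO a) \<longrightarrow>
          concretization L A'O A'M CO CM \<gamma> \<longrightarrow>
          interp_le L AO (induced_morph L CM \<alpha> \<gamma>) A'O A'M)
     \<and> abstraction L CO CM AO (induced_morph L CM \<alpha> \<gamma>) \<alpha>
     \<and> (\<forall>A'O A'M. interpretation_of L A'O A'M \<longrightarrow> (\<forall>a\<in>Obj L. A'O a = AO a) \<longrightarrow>
          abstraction L CO CM A'O A'M \<alpha> \<longrightarrow>
          interp_le L AO (induced_morph L CM \<alpha> \<gamma>) A'O A'M)"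
proof -
  let ?G = "induced_morph L CM \<alpha> \<gamma>"
  have cat1: "\<And>f. f \<in> Arr L \<Longrightarrow> dom L f \<in> Obj L \<and> cod L f \<in> Obj L"
    using L unfolding is_category_def by blast
  have cat2: "\<And>a. a \<in> Obj L \<Longrightarrow> ident L a \<in> Arr L \<and> dom L (ident L a) = a \<and> cod L (ident L a) = a"
    using L unfolding is_category_def by blast
  have cat3: "\<And>f g. f \<in> Arr L \<Longrightarrow> g \<in> Arr L \<Longrightarrow> cod L f = dom L g \<Longrightarrow>
         comp L g f \<in> Arr L \<and> dom L (comp L g f) = dom L f \<and> cod L (comp L g f) = cod L g"
    using L unfolding is_category_def by blast
  have Cpos: "\<And>a. a \<in> Obj L \<Longrightarrow> is_poset (CO a)" using C unfolding interpretation_of_def by blast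
  have Cmono: "\<And>f. f \<in> Arr L \<Longrightarrow> monotone_map (CO (dom L f)) (CO (cod L f)) (CM f)"
    using C unfolding interpretation_of_def by blast
  have Cid: "\<And>a x. a \<in> Obj L \<Longrightarrow> x \<in> fst (CO a) \<Longrightarrow> snd (CO a) (CM (ident L a) x) x"
    using C unfolding interpretation_of_def map_le_def by auto
  have Ccomp: "\<And>f g x. f \<in> Arr L \<Longrightarrow> g \<in> Arr L \<Longrightarrow> cod L f = dom L g \<Longrightarrow> x \<in> fst (CO (dom L f)) \<Longrightarrow>
        snd (CO (cod L g)) (CM (comp L g f) x) (CM g (CM f x))"
    using C unfolding interpretation_of_def map_le_def by auto
  have Crefl: "\<And>a x. a \<in> Obj L \<Longrightarrow> x \<in> fst (CO a) \<Longrightarrow> snd (CO a) x x"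
    using Cpos unfolding is_poset_def Let_def by blast
  have Ctrans: "\<And>a x y z. a \<in> Obj L \<Longrightarrow> x \<in> fst (CO a) \<Longrightarrow> y \<in> fst (CO a) \<Longrightarrow> z \<in> fst (CO a) \<Longrightarrow>
       snd (CO a) x y \<Longrightarrow> snd (CO a) y z \<Longrightarrow> snd (CO a) x z"
    using Cpos unfolding is_poset_def Let_def by blast
  have Arefl: "\<And>a x. a \<in> Obj L \<Longrightarrow> x \<in> fst (AO a) \<Longrightarrow> snd (AO a) x x"
    using A unfolding is_poset_def Let_def by blast
  have Atrans: "\<And>a x y z. a \<in> Obj L \<Longrightarrow> x \<in> fst (AO a) \<Longrightarrow> y \<in> fst (AO a) \<Longrightarrow> z \<in> fst (AO a) \<Longrightarrow>
       snd (AO a) x y \<Longrightarrow> snd (AO a) y z \<Longrightarrow> snd (AO a) x z"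
    using A unfolding is_poset_def Let_def by blast
  have amono: "\<And>a. a \<in> Obj L \<Longrightarrow> monotone_map (CO a) (AO a) (\<alpha> a)"
    using G unfolding galois_connection_def by blast
  have gmono: "\<And>a. a \<in> Obj L \<Longrightarrow> monotone_map (AO a) (CO a) (\<gamma> a)"
    using G unfolding galois_connection_def by blast
  have adj: "\<And>a c x. a \<in> Obj L \<Longrightarrow> c \<in> fst (CO a) \<Longrightarrow> x \<in> fst (AO a) \<Longrightarrow>
       snd (AO a) (\<alpha> a c) x \<longleftrightarrow> snd (CO a) c (\<gamma> a x)"
    using G unfolding galois_connection_def by blast
  have aC: "\<And>a c. a \<in> Obj L \<Longrightarrow> c \<in> fst (CO a) \<Longrightarrow> \<alpha> a c \<in> fst (AO a)"
    using amono unfolding monotone_map_def by blast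
  have gA: "\<And>a x. a \<in> Obj L \<Longrightarrow> x \<in> fst (AO a) \<Longrightarrow> \<gamma> a x \<in> fst (CO a)"
    using gmono unfolding monotone_map_def by blast
  have am: "\<And>a c d. a \<in> Obj L \<Longrightarrow> c \<in> fst (CO a) \<Longrightarrow> d \<in> fst (CO a) \<Longrightarrow> snd (CO a) c d \<Longrightarrow> snd (AO a) (\<alpha> a c) (\<alpha> a d)"
    using amono unfolding monotone_map_def by blast
  have gm: "\<And>a c d. a \<in> Obj L \<Longrightarrow> c \<in> fst (AO a) \<Longrightarrow> d \<in> fst (AO a) \<Longrightarrow> snd (AO a) c d \<Longrightarrow> snd (CO a) (\<gamma> a c) (\<gamma> a d)"
    using gmono unfolding monotone_map_def by blast
  have CfC: "\<And>f c. f \<in> Arr L \<Longrightarrow> c \<in> fst (CO (dom L f)) \<Longrightarrow> CM f c \<in> fst (CO (cod L f))"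
    using Cmono unfolding monotone_map_def by blast
  have Cfm: "\<And>f c d. f \<in> Arr L \<Longrightarrow> c \<in> fst (CO (dom L f)) \<Longrightarrow> d \<in> fst (CO (dom L f)) \<Longrightarrow> snd (CO (dom L f)) c d \<Longrightarrow> snd (CO (cod L f)) (CM f c) (CM f d)"
    using Cmono unfolding monotone_map_def by blast
  have unit: "\<And>a c. a \<in> Obj L \<Longrightarrow> c \<in> fst (CO a) \<Longrightarrow> snd (CO a) c (\<gamma> a (\<alpha> a c))"
    using adj aC Arefl by blast
  have counit: "\<And>a x. a \<in> Obj L \<Longrightarrow> x \<in> fst (AO a) \<Longrightarrow> snd (AO a) (\<alpha> a (\<gamma> a x)) x"
    using adj gA Crefl by blast
  have Gdef: "\<And>f x. ?G f x = \<alpha> (cod L f) (CM f (\<gamma> (dom L f) x))"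
    unfolding induced_morph_def by simp
  have GA: "\<And>f x. f \<in> Arr L \<Longrightarrow> x \<in> fst (AO (dom L f)) \<Longrightarrow> ?G f x \<in> fst (AO (cod L f))"
    unfolding Gdef using cat1 aC CfC gA by blast
  have I: "interpretation_of L AO ?G"
    unfolding interpretation_of_def
  proof (intro conjI ballI impI)
    show "\<And>a. a \<in> Obj L \<Longrightarrow> is_poset (AO a)" using A by blast
  next
    fix f assume f: "f \<in> Arr L"
    show "monotone_map (AO (dom L f)) (AO (cod L f)) (?G f)"
      unfolding monotone_map_def
    proof (intro conjI ballI impI)
      fix x assume "x \<in> fst (AO (dom L f))" then show "?G f x \<in> fst (AO (cod L f))" using GA f by blast
    next
      fix x y assume x: "x \<in> fst (AO (dom L f))" and y: "y \<in> fst (AO (dom L f))"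
        and xy: "snd (AO (dom L f)) x y"
      show "snd (AO (cod L f)) (?G f x) (?G f y)"
        unfolding Gdef using f cat1 am CfC Cfm gA gm x y xy by metis
    qed
  next
    fix a assume a: "a \<in> Obj L"
    show "map_le (AO a) (AO a) (?G (ident L a)) id"
      unfolding map_le_def
    proof
      fix x assume x: "x \<in> fst (AO a)"
      have i: "ident L a \<in> Arr L" "dom L (ident L a) = a" "cod L (ident L a) = a" using cat2 a by auto
      have "snd (AO a) (\<alpha> a (CM (ident L a) (\<gamma> a x))) (\<alpha> a (\<gamma> a x))"
        using am[OF a] Cid[OF a] gA[OF a x] CfC[OF i(1)] i by metis
      moreover have "snd (AO a) (\<alpha> a (\<gamma> a x)) x" using counit a x by blast
      ultimately show "snd (AO a) (?G (ident L a) x) (id x)"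
        unfolding Gdef i id_def using Atrans[OF a] aC[OF a] gA[OF a x] CfC[OF i(1)] i x by metis
    qed
  next
    fix f g assume f: "f \<in> Arr L" and g: "g \<in> Arr L" and fg: "cod L f = dom L g"
    have gf: "comp L g f \<in> Arr L" "dom L (comp L g f) = dom L f" "cod L (comp L g f) = cod L g"
      using cat3[OF f g fg] by auto
    show "map_le (AO (dom L f)) (AO (cod L g)) (?G (comp L g f)) (?G g \<circ> ?G f)"
      unfolding map_le_def
    proof
      fix x assume x: "x \<in> fst (AO (dom L f))"
      define a where "a = dom L f"
      define b where "b = cod L f"
      define c where "c = cod L g"
      have ob: "a \<in> Obj L" "b \<in> Obj L" "c \<in> Obj L" using cat1 f g a_def b_def c_def by auto
      have dg: "dom L g = b" using fg b_def by simp
      define u where "u = \<gamma> a x"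
      have u: "u \<in> fst (CO a)" using gA ob x a_def u_def by blast
      define v where "v = CM f u"
      have v: "v \<in> fst (CO b)" using CfC f u a_def b_def v_def by blast
      have gv: "CM g v \<in> fst (CO c)" using CfC g v dg c_def by metis
      have w: "\<gamma> b (\<alpha> b v) \<in> fst (CO b)" using gA aC ob v by blast
      have gw: "CM g (\<gamma> b (\<alpha> b v)) \<in> fst (CO c)" using CfC g w dg c_def by metis
      have gfu: "CM (comp L g f) u \<in> fst (CO c)" using CfC gf u a_def c_def by metis
      have s1: "snd (CO c) (CM (comp L g f) u) (CM g v)"
        using Ccomp f g fg u a_def c_def v_def by metis
      have s2: "snd (CO c) (CM g v) (CM g (\<gamma> b (\<alpha> b v)))"
        using Cfm[OF g] v w unit[OF ob(2) v] dg c_def by metis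
      have "snd (CO c) (CM (comp L g f) u) (CM g (\<gamma> b (\<alpha> b v)))"
        using Ctrans[OF ob(3) gfu gv gw s1 s2] .
      then have "snd (AO c) (\<alpha> c (CM (comp L g f) u)) (\<alpha> c (CM g (\<gamma> b (\<alpha> b v))))"
        using am ob gfu gw by blast
      then show "snd (AO (cod L g)) (?G (comp L g f) x) ((?G g \<circ> ?G f) x)"
        unfolding Gdef o_def gf using a_def b_def c_def u_def v_def dg by simp
    qed
  qed
  have N: "(normal_interpretation L CO CM \<and>
          (\<forall>a\<in>Obj L. galois_insertion (CO a) (AO a) (\<alpha> a) (\<gamma> a)))
         \<longrightarrow> normal_interpretation L AO ?G"
  proof
    assume h: "normal_interpretation L CO CM \<and> (\<forall>a\<in>Obj L. galois_insertion (CO a) (AO a) (\<alpha> a) (\<gamma> a))"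
    show "normal_interpretation L AO ?G"
      unfolding normal_interpretation_def
    proof (intro conjI I ballI)
      fix a x assume a: "a \<in> Obj L" and x: "x \<in> fst (AO a)"
      have i: "dom L (ident L a) = a" "cod L (ident L a) = a" using cat2 a by auto
      have "CM (ident L a) (\<gamma> a x) = \<gamma> a x"
        using h a gA[OF a x] unfolding normal_interpretation_def by blast
      moreover have "\<alpha> a (\<gamma> a x) = x" using h a x unfolding galois_insertion_def by blast
      ultimately show "?G (ident L a) x = x" unfolding Gdef i by simp
    qed
  qed
  have Co: "concretization L AO ?G CO CM \<gamma>"
    unfolding concretization_def map_le_def
  proof (intro conjI ballI)
    fix a assume "a \<in> Obj L" then show "monotone_map (AO a) (CO a) (\<gamma> a)" using gmono by blast
  next
    fix f x assume f: "f \<in> Arr L" and x: "x \<in> fst (AO (dom L f))"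
    have "CM f (\<gamma> (dom L f) x) \<in> fst (CO (cod L f))" using CfC f gA cat1 x by blast
    then show "snd (CO (cod L f)) ((CM f \<circ> \<gamma> (dom L f)) x) ((\<gamma> (cod L f) \<circ> ?G f) x)"
      unfolding o_def Gdef using unit cat1 f by blast
  qed
  have Co2: "\<forall>A'O A'M. interpretation_of L A'O A'M \<longrightarrow> (\<forall>a\<in>Obj L. A'O a = AO a) \<longrightarrow>
          concretization L A'O A'M CO CM \<gamma> \<longrightarrow> interp_le L AO ?G A'O A'M"
  proof (intro allI impI)
    fix A'O A'M assume I': "interpretation_of L A'O A'M" and eq: "\<forall>a\<in>Obj L. A'O a = AO a"
      and c: "concretization L A'O A'M CO CM \<gamma>"
    show "interp_le L AO ?G A'O A'M"
      unfolding interp_le_def map_le_def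
    proof (intro conjI ballI)
      fix a assume "a \<in> Obj L" then show "AO a = A'O a" using eq by simp
    next
      fix f x assume f: "f \<in> Arr L" and x: "x \<in> fst (AO (dom L f))"
      have ob: "dom L f \<in> Obj L" "cod L f \<in> Obj L" using cat1 f by auto
      have Ax: "A'M f x \<in> fst (AO (cod L f))"
        using I' f x eq ob unfolding interpretation_of_def monotone_map_def by metis
      have "snd (CO (cod L f)) (CM f (\<gamma> (dom L f) x)) (\<gamma> (cod L f) (A'M f x))"
        using c f x eq ob unfolding concretization_def map_le_def o_def by metis
      then show "snd (AO (cod L f)) (?G f x) (A'M f x)"
        unfolding Gdef using adj ob Ax CfC f gA x by blast
    qed
  qed
  have Ab: "abstraction L CO CM AO ?G \<alpha>"
    unfolding abstraction_def map_le_def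
  proof (intro conjI ballI)
    fix a assume "a \<in> Obj L" then show "monotone_map (CO a) (AO a) (\<alpha> a)" using amono by blast
  next
    fix f c assume f: "f \<in> Arr L" and c: "c \<in> fst (CO (dom L f))"
    have ob: "dom L f \<in> Obj L" "cod L f \<in> Obj L" using cat1 f by auto
    have "snd (CO (cod L f)) (CM f c) (CM f (\<gamma> (dom L f) (\<alpha> (dom L f) c)))"
      using Cfm f c unit ob gA aC by blast
    then show "snd (AO (cod L f)) ((\<alpha> (cod L f) \<circ> CM f) c) ((?G f \<circ> \<alpha> (dom L f)) c)"
      unfolding o_def Gdef using am ob CfC f c gA aC by blast
  qed
  have Ab2: "\<forall>A'O A'M. interpretation_of L A'O A'M \<longrightarrow> (\<forall>a\<in>Obj L. A'O a = AO a) \<longrightarrow>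
          abstraction L CO CM A'O A'M \<alpha> \<longrightarrow> interp_le L AO ?G A'O A'M"
  proof (intro allI impI)
    fix A'O A'M assume I': "interpretation_of L A'O A'M" and eq: "\<forall>a\<in>Obj L. A'O a = AO a"
      and ab: "abstraction L CO CM A'O A'M \<alpha>"
    show "interp_le L AO ?G A'O A'M"
      unfolding interp_le_def map_le_def
    proof (intro conjI ballI)
      fix a assume "a \<in> Obj L" then show "AO a = A'O a" using eq by simp
    next
      fix f x assume f: "f \<in> Arr L" and x: "x \<in> fst (AO (dom L f))"
      have ob: "dom L f \<in> Obj L" "cod L f \<in> Obj L" using cat1 f by auto
      have mA: "monotone_map (AO (dom L f)) (AO (cod L f)) (A'M f)"
        using I' f eq ob unfolding interpretation_of_def by metis
      have Ax: "A'M f x \<in> fst (AO (cod L f))" using mA x unfolding monotone_map_def by blast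
      have agx: "\<alpha> (dom L f) (\<gamma> (dom L f) x) \<in> fst (AO (dom L f))" using aC gA ob x by blast
      have Aagx: "A'M f (\<alpha> (dom L f) (\<gamma> (dom L f) x)) \<in> fst (AO (cod L f))"
        using mA agx unfolding monotone_map_def by blast
      have s1: "snd (AO (cod L f)) (?G f x) (A'M f (\<alpha> (dom L f) (\<gamma> (dom L f) x)))"
        using ab f eq ob gA x unfolding abstraction_def map_le_def o_def Gdef by metis
      have s2: "snd (AO (cod L f)) (A'M f (\<alpha> (dom L f) (\<gamma> (dom L f) x))) (A'M f x)"
        using mA agx x counit ob unfolding monotone_map_def by blast
      show "snd (AO (cod L f)) (?G f x) (A'M f x)"
        using Atrans[OF ob(2) GA[OF f x] Aagx Ax s1 s2] .
    qed
  qed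
  show ?thesis using I N Co Co2 Ab Ab2 by blast
qed

end
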